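(* The sequence $(\beta^c_k)_{k\in\mathbb{N}}$ is strictly decreasing and $\lim_{k\to+\infty}\beta^c_k=1$.
   Context: $\mathbb{N}=\{0,1,2,\dots\}$. For $t\ge 0$ let $q(t)=\lfloor t+1\rfloor/2$ if $\lfloor t\rfloor$ is odd and $q(t)=t-\lfloor t\rfloor/2$ if $\lfloor t\rfloor$ is even, and $p(t)=t+1-q(t)$. For $\beta\ge1$ let $\hat\sigma(t,\beta)\in(0,1)$ be the unique solution $\sigma$ of $\frac{p(t)\sigma}{\sqrt{1-\sigma^2}}+\frac{q(t)\sigma}{\sqrt{\beta^2-\sigma^2}}=1$, and $l(t,\beta)=\frac{p(t)}{\sqrt{1-\hat\sigma^2}}+\frac{\beta^2q(t)}{\sqrt{\beta^2-\hat\sigma^2}}-t-\sqrt2$. For $k\in\mathbb{N}$, $\delta(k,\beta)=l(2k+2,\beta)-l(2k,\beta)$. For each $k\in\mathbb{N}$, $\beta^c_k$ denotes the unique number in $(1,\sqrt2)$ with $\delta(k,\beta^c_k)=0$ (well defined since $\beta\mapsto\delta(k,\beta)$ is strictly increasing on $[1,\infty)$ with $\delta(k,1)<0<\delta(k,\sqrt2)$). *)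

theory Defs
  imports "HOL-Analysis.Analysis"
begin

definition q_fun :: "real \<Rightarrow> real" where
  "q_fun t = (if odd \<lfloor>t\<rfloor> then real_of_int \<lfloor>t + 1\<rfloor> / 2
              else t - real_of_int \<lfloor>t\<rfloor> / 2)"

definition p_fun :: "real \<Rightarrow> real" where
  "p_fun t = t + 1 - q_fun t"

definition sigma_hat :: "real \<Rightarrow> real \<Rightarrow> real" where
  "sigma_hat t \<beta> = (THE \<sigma>. 0 < \<sigma> \<and> \<sigma> < 1 \<and>
      p_fun t * \<sigma> / sqrt (1 - \<sigma>\<^sup>2) + q_fun t * \<sigma> / sqrt (\<beta>\<^sup>2 - \<sigma>\<^sup>2) = 1)"

definition l_fun :: "real \<Rightarrow> real \<Rightarrow> real" where
  "l_fun t \<beta> = p_fun t / sqrt (1 - (sigma_hat t \<beta>)\<^sup>2)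
      + \<beta>\<^sup>2 * q_fun t / sqrt (\<beta>\<^sup>2 - (sigma_hat t \<beta>)\<^sup>2) - t - sqrt 2"

definition delta :: "nat \<Rightarrow> real \<Rightarrow> real" where
  "delta k \<beta> = l_fun (2 * real k + 2) \<beta> - l_fun (2 * real k) \<beta>"

definition beta_c :: "nat \<Rightarrow> real" where
  "beta_c k = (THE \<beta>. 1 < \<beta> \<and> \<beta> < sqrt 2 \<and> delta k \<beta> = 0)"

end

theory Submission
  imports Defs
begin

definition phi :: "real \<Rightarrow> real \<Rightarrow> real \<Rightarrow> real \<Rightarrow> real" where
  "phi p q b \<sigma> = p * \<sigma> / sqrt (1 - \<sigma>\<^sup>2) + q * \<sigma> / sqrt (b\<^sup>2 - \<sigma>\<^sup>2)"

definition sg :: "real \<Rightarrow> real \<Rightarrow> real \<Rightarrow> real" where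
  "sg p q b = (THE \<sigma>. 0 < \<sigma> \<and> \<sigma> < 1 \<and>
      p * \<sigma> / sqrt (1 - \<sigma>\<^sup>2) + q * \<sigma> / sqrt (b\<^sup>2 - \<sigma>\<^sup>2) = 1)"

lemma frac_mono_strict:
  fixes a b C :: real
  assumes "0 \<le> a" "a < b" "b\<^sup>2 < C"
  shows "a / sqrt (C - a\<^sup>2) < b / sqrt (C - b\<^sup>2)"
proof -
  have "a\<^sup>2 < b\<^sup>2" using assms by (simp add: power_strict_mono)
  then have "sqrt (C - b\<^sup>2) \<le> sqrt (C - a\<^sup>2)" by simp
  moreover have "0 < sqrt (C - b\<^sup>2)" using assms by simp
  ultimately show ?thesis using assms frac_less by blast
qed

lemma frac_mono:
  fixes a b C :: real
  assumes "0 \<le> a" "a \<le> b" "b\<^sup>2 < C"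
  shows "a / sqrt (C - a\<^sup>2) \<le> b / sqrt (C - b\<^sup>2)"
  using frac_mono_strict[OF assms(1) _ assms(3)] assms(2) by (cases "a = b") auto

lemma phi_strict:
  assumes "0 < p" "0 \<le> q" "1 \<le> b" "0 \<le> x" "x < y" "y < 1"
  shows "phi p q b x < phi p q b y"
proof -
  have y2: "y\<^sup>2 < 1" using assms by (simp add: power_less_one_iff abs_less_iff)
  have "x / sqrt (1 - x\<^sup>2) < y / sqrt (1 - y\<^sup>2)"
    using frac_mono_strict[of x y 1] assms y2 by simp
  then have A: "p * x / sqrt (1 - x\<^sup>2) < p * y / sqrt (1 - y\<^sup>2)"
    using assms(1) by (simp add: times_divide_eq_right[symmetric] del: times_divide_eq_right)
  have "1 \<le> b\<^sup>2" using assms by (simp add: one_le_power)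
  then have "x / sqrt (b\<^sup>2 - x\<^sup>2) \<le> y / sqrt (b\<^sup>2 - y\<^sup>2)"
    using frac_mono[of x y "b\<^sup>2"] assms y2 by linarith
  then have B: "q * x / sqrt (b\<^sup>2 - x\<^sup>2) \<le> q * y / sqrt (b\<^sup>2 - y\<^sup>2)"
    using assms(2) by (simp add: times_divide_eq_right[symmetric] mult_left_mono del: times_divide_eq_right)
  show ?thesis using A B unfolding phi_def by simp
qed

lemma sg_ex1:
  assumes "1 \<le> p" "0 \<le> q" "1 \<le> b"
  shows "\<exists>!\<sigma>. 0 < \<sigma> \<and> \<sigma> < 1 \<and> p * \<sigma> / sqrt (1 - \<sigma>\<^sup>2) + q * \<sigma> / sqrt (b\<^sup>2 - \<sigma>\<^sup>2) = 1"
proof -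
  have b2: "1 \<le> b\<^sup>2" using assms by (simp add: one_le_power)
  have cont: "continuous_on {0..4/5} (phi p q b)"
  proof -
    have "\<forall>x\<in>{0..4/5::real}. x\<^sup>2 < 1 \<and> x\<^sup>2 < b\<^sup>2"
    proof
      fix x :: real assume "x \<in> {0..4/5}"
      then have "x\<^sup>2 \<le> (4/5)\<^sup>2" by (auto intro: power_mono)
      then show "x\<^sup>2 < 1 \<and> x\<^sup>2 < b\<^sup>2" using b2 by (simp add: power2_eq_square)
    qed
    then show ?thesis unfolding phi_def
      by (intro continuous_intros) auto
  qed
  have f0: "phi p q b 0 \<le> 1" by (simp add: phi_def)
  have "sqrt (1 - (4/5::real)\<^sup>2) = sqrt ((3/5)\<^sup>2)"
    by (simp add: power2_eq_square)
  then have s45: "sqrt (1 - (4/5::real)\<^sup>2) = 3/5" by simp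
  have "(4/5::real)\<^sup>2 < b\<^sup>2" using b2 by (simp add: power2_eq_square)
  then have "0 \<le> q * (4/5) / sqrt (b\<^sup>2 - (4/5)\<^sup>2)" using assms by simp
  moreover have "p * (4/5) / sqrt (1 - (4/5)\<^sup>2) = 4 * p / 3" unfolding s45 by simp
  then have "p * (4/5) / sqrt (1 - (4/5)\<^sup>2) \<ge> 1" using assms by simp
  ultimately have f1: "1 \<le> phi p q b (4/5)" unfolding phi_def by linarith
  obtain x where x: "0 \<le> x" "x \<le> 4/5" "phi p q b x = 1"
    using IVT'[OF f0 f1 _ cont] by auto
  have "x \<noteq> 0" using x by (auto simp: phi_def)
  then have ex: "0 < x \<and> x < 1 \<and> phi p q b x = 1" using x by auto
  show ?thesis unfolding phi_def[symmetric]
  proof (rule ex1I[of _ x])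
    show "0 < x \<and> x < 1 \<and> phi p q b x = 1" by (fact ex)
    fix y assume y: "0 < y \<and> y < 1 \<and> phi p q b y = 1"
    show "y = x"
    proof (rule ccontr)
      assume "y \<noteq> x"
      then consider "y < x" | "x < y" by linarith
      then show False
        using phi_strict[of p q b y x] phi_strict[of p q b x y] ex y assms by (cases, auto)
    qed
  qed
qed

lemma sg_props:
  assumes "1 \<le> p" "0 \<le> q" "1 \<le> b"
  shows "0 < sg p q b" "sg p q b < 1"
    "p * sg p q b / sqrt (1 - (sg p q b)\<^sup>2) + q * sg p q b / sqrt (b\<^sup>2 - (sg p q b)\<^sup>2) = 1"
  using theI'[OF sg_ex1[OF assms]] unfolding sg_def by auto


definition PV :: "real \<Rightarrow> real \<Rightarrow> real \<Rightarrow> real" where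
  "PV p q b = p / sqrt (1 - (sg p q b)\<^sup>2) + b\<^sup>2 * q / sqrt (b\<^sup>2 - (sg p q b)\<^sup>2)"

definition Gf :: "real \<Rightarrow> real \<Rightarrow> real \<Rightarrow> real \<Rightarrow> real" where
  "Gf p q b \<sigma> = \<sigma> + p * sqrt (1 - \<sigma>\<^sup>2) + q * sqrt (b\<^sup>2 - \<sigma>\<^sup>2)"

definition wf :: "real \<Rightarrow> real \<Rightarrow> real \<Rightarrow> real" where
  "wf p q b = q * b / sqrt (b\<^sup>2 - (sg p q b)\<^sup>2)"

lemma lagrange_id:
  "((a::real)\<^sup>2 + x\<^sup>2) * (c\<^sup>2 + y\<^sup>2) - (a * c + x * y)\<^sup>2 = (a * y - x * c)\<^sup>2"
  unfolding power2_eq_square by (simp add: algebra_simps)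

lemma cs_ineq:
  fixes a c A C :: real
  assumes "a\<^sup>2 \<le> A\<^sup>2" "c\<^sup>2 \<le> C\<^sup>2" "0 \<le> A" "0 \<le> C"
  shows "a * c + sqrt (A\<^sup>2 - a\<^sup>2) * sqrt (C\<^sup>2 - c\<^sup>2) \<le> A * C"
proof -
  define x where "x = sqrt (A\<^sup>2 - a\<^sup>2)"
  define y where "y = sqrt (C\<^sup>2 - c\<^sup>2)"
  have x2: "x\<^sup>2 = A\<^sup>2 - a\<^sup>2" using assms unfolding x_def by simp
  have y2: "y\<^sup>2 = C\<^sup>2 - c\<^sup>2" using assms unfolding y_def by simp
  have A2: "A\<^sup>2 = a\<^sup>2 + x\<^sup>2" using x2 by linarith
  have C2: "C\<^sup>2 = c\<^sup>2 + y\<^sup>2" using y2 by linarith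
  have AC: "(A * C)\<^sup>2 = (a\<^sup>2 + x\<^sup>2) * (c\<^sup>2 + y\<^sup>2)" unfolding power_mult_distrib A2 C2 ..
  have "(A * C)\<^sup>2 - (a * c + x * y)\<^sup>2 = (a * y - x * c)\<^sup>2"
  proof -
    have "(a\<^sup>2 + x\<^sup>2) * (c\<^sup>2 + y\<^sup>2) - (a * c + x * y)\<^sup>2 = (a * y - x * c)\<^sup>2"
      by (rule lagrange_id)
    then show ?thesis using AC by linarith
  qed
  then have sq: "(a * c + x * y)\<^sup>2 \<le> (A * C)\<^sup>2" by (metis diff_ge_0_iff_ge zero_le_power2)
  have "a * c + x * y \<le> A * C" using power2_le_imp_le[OF sq] assms by simp
  then show ?thesis unfolding x_def y_def .
qed

lemma cs_strict1:
  fixes a c :: real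
  assumes "a\<^sup>2 \<le> 1" "c\<^sup>2 \<le> 1" "a \<noteq> c"
  shows "a * c + sqrt (1 - a\<^sup>2) * sqrt (1 - c\<^sup>2) < 1"
proof -
  define x where "x = sqrt (1 - a\<^sup>2)"
  define y where "y = sqrt (1 - c\<^sup>2)"
  have x2: "x\<^sup>2 = 1 - a\<^sup>2" using assms unfolding x_def by simp
  have y2: "y\<^sup>2 = 1 - c\<^sup>2" using assms unfolding y_def by simp
  have "2 * (1 - (a * c + x * y)) = (a - c)\<^sup>2 + (x - y)\<^sup>2"
    using x2 y2 by (simp add: power2_diff)
  moreover have "(a - c)\<^sup>2 > 0" using assms by simp
  moreover have "(x - y)\<^sup>2 \<ge> 0" by simp
  ultimately have "a * c + x * y < 1" by argo
  then show ?thesis unfolding x_def y_def .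
qed


lemma sg_facts:
  assumes "1 \<le> p" "0 \<le> q" "1 \<le> b"
  defines "s \<equiv> sg p q b"
  shows "0 < s" "s < 1" "s\<^sup>2 < 1" "s\<^sup>2 < b\<^sup>2" "0 < sqrt (1 - s\<^sup>2)" "0 < sqrt (b\<^sup>2 - s\<^sup>2)"
    "(sqrt (1 - s\<^sup>2))\<^sup>2 = 1 - s\<^sup>2" "(sqrt (b\<^sup>2 - s\<^sup>2))\<^sup>2 = b\<^sup>2 - s\<^sup>2"
    "p * s / sqrt (1 - s\<^sup>2) + q * s / sqrt (b\<^sup>2 - s\<^sup>2) = 1"
proof -
  show s0: "0 < s" and s1: "s < 1" and eq: "p * s / sqrt (1 - s\<^sup>2) + q * s / sqrt (b\<^sup>2 - s\<^sup>2) = 1"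
    using sg_props[OF assms(1-3)] unfolding s_def by auto
  show s2: "s\<^sup>2 < 1" using s0 s1 by (simp add: power_less_one_iff abs_less_iff)
  have "1 \<le> b\<^sup>2" using assms by (simp add: one_le_power)
  then show s3: "s\<^sup>2 < b\<^sup>2" using s2 by linarith
  show "0 < sqrt (1 - s\<^sup>2)" "0 < sqrt (b\<^sup>2 - s\<^sup>2)" using s2 s3 by auto
  show "(sqrt (1 - s\<^sup>2))\<^sup>2 = 1 - s\<^sup>2" "(sqrt (b\<^sup>2 - s\<^sup>2))\<^sup>2 = b\<^sup>2 - s\<^sup>2" using s2 s3 by auto
qed

lemma PV_eq_G:
  assumes "1 \<le> p" "0 \<le> q" "1 \<le> b"
  shows "PV p q b = Gf p q b (sg p q b)"
proof -
  define s where "s = sg p q b"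
  define u where "u = sqrt (1 - s\<^sup>2)"
  define v where "v = sqrt (b\<^sup>2 - s\<^sup>2)"
  note F = sg_facts[OF assms, folded s_def, folded u_def v_def]
  have u0: "0 < u" and v0: "0 < v" using F by auto
  have u2: "u\<^sup>2 = 1 - s\<^sup>2" and v2: "v\<^sup>2 = b\<^sup>2 - s\<^sup>2" using F by auto
  have e1: "p * s * v + q * s * u = u * v" using F(9) u0 v0 by (simp add: field_simps)
  have "u * v * (s + p * u + q * v) = s * (u * v) + p * u\<^sup>2 * v + q * u * v\<^sup>2"
    by (simp add: power2_eq_square algebra_simps)
  also have "\<dots> = s * (p * s * v + q * s * u) + p * (1 - s\<^sup>2) * v + q * u * (b\<^sup>2 - s\<^sup>2)"
    unfolding e1 u2 v2 ..
  also have "\<dots> = p * v + b\<^sup>2 * q * u"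
    by (simp add: power2_eq_square algebra_simps)
  finally have "p * v + b\<^sup>2 * q * u = u * v * (s + p * u + q * v)" by simp
  then have "p / u + b\<^sup>2 * q / v = s + p * u + q * v" using u0 v0 by (simp add: field_simps)
  then show ?thesis unfolding PV_def Gf_def s_def[symmetric] u_def[symmetric] v_def[symmetric] .
qed


lemma key_alg:
  fixes p q b b' s u v \<sigma> :: real
  assumes u0: "0 < u" and v0: "0 < v" and e1: "p * s * v + q * s * u = u * v"
  shows "\<sigma> + p * ((1 - \<sigma> * s) / u) + q * ((b' * b - \<sigma> * s) / v)
      = p / u + b\<^sup>2 * q / v + (b' - b) * (q * b / v)"
proof -
  have "(\<sigma> + p * ((1 - \<sigma> * s) / u) + q * ((b' * b - \<sigma> * s) / v)) * (u * v)
      = \<sigma> * (u * v) - \<sigma> * (p * s * v + q * s * u) + p * v + q * b' * b * u"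
    using u0 v0 by (simp add: field_simps)
  also have "\<dots> = p * v + q * b' * b * u" unfolding e1 by simp
  also have "\<dots> = (p / u + b\<^sup>2 * q / v + (b' - b) * (q * b / v)) * (u * v)"
    using u0 v0 by (simp add: field_simps power2_eq_square)
  finally show ?thesis using u0 v0 by simp
qed

lemma key:
  assumes "1 \<le> p" "0 \<le> q" "1 \<le> b" "1 \<le> b'" "\<sigma>\<^sup>2 \<le> 1"
  shows "Gf p q b' \<sigma> \<le> PV p q b + (b' - b) * wf p q b"
proof -
  define s where "s = sg p q b"
  define u where "u = sqrt (1 - s\<^sup>2)"
  define v where "v = sqrt (b\<^sup>2 - s\<^sup>2)"
  note F = sg_facts[OF assms(1-3), folded s_def, folded u_def v_def]
  have u0: "0 < u" and v0: "0 < v" using F by auto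
  have e1: "p * s * v + q * s * u = u * v" using F(9) u0 v0 by (simp add: field_simps)
  have b'2: "1 \<le> b'\<^sup>2" using assms by (simp add: one_le_power)
  have h1: "\<sigma> * s + sqrt (1 - \<sigma>\<^sup>2) * u \<le> 1"
    using cs_ineq[of \<sigma> 1 s 1] assms F unfolding u_def by simp
  have h2: "\<sigma> * s + sqrt (b'\<^sup>2 - \<sigma>\<^sup>2) * v \<le> b' * b"
    using cs_ineq[of \<sigma> b' s b] assms F b'2 unfolding v_def by simp
  have i1: "sqrt (1 - \<sigma>\<^sup>2) \<le> (1 - \<sigma> * s) / u" using h1 u0 by (simp add: pos_le_divide_eq)
  have i2: "sqrt (b'\<^sup>2 - \<sigma>\<^sup>2) \<le> (b' * b - \<sigma> * s) / v" using h2 v0 by (simp add: pos_le_divide_eq)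
  have "Gf p q b' \<sigma> \<le> \<sigma> + p * ((1 - \<sigma> * s) / u) + q * ((b' * b - \<sigma> * s) / v)"
    unfolding Gf_def using mult_left_mono[OF i1, of p] mult_left_mono[OF i2, of q] assms by linarith
  also have "\<dots> = p / u + b\<^sup>2 * q / v + (b' - b) * (q * b / v)" by (rule key_alg[OF u0 v0 e1])
  finally show ?thesis unfolding PV_def wf_def s_def[symmetric] u_def[symmetric] v_def[symmetric] .
qed

lemma key_strict:
  assumes "1 \<le> p" "0 \<le> q" "1 \<le> b" "\<sigma>\<^sup>2 \<le> 1" "\<sigma> \<noteq> sg p q b"
  shows "Gf p q b \<sigma> < PV p q b"
proof -
  define s where "s = sg p q b"
  define u where "u = sqrt (1 - s\<^sup>2)"
  define v where "v = sqrt (b\<^sup>2 - s\<^sup>2)"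
  note F = sg_facts[OF assms(1-3), folded s_def, folded u_def v_def]
  have u0: "0 < u" and v0: "0 < v" using F by auto
  have e1: "p * s * v + q * s * u = u * v" using F(9) u0 v0 by (simp add: field_simps)
  have b2: "1 \<le> b\<^sup>2" using assms by (simp add: one_le_power)
  have h1: "\<sigma> * s + sqrt (1 - \<sigma>\<^sup>2) * u < 1"
    using cs_strict1[of \<sigma> s] assms F unfolding u_def s_def by simp
  have h2: "\<sigma> * s + sqrt (b\<^sup>2 - \<sigma>\<^sup>2) * v \<le> b * b"
    using cs_ineq[of \<sigma> b s b] assms F b2 unfolding v_def by simp
  have i1: "sqrt (1 - \<sigma>\<^sup>2) < (1 - \<sigma> * s) / u" using h1 u0 by (simp add: pos_less_divide_eq)
  have i2: "sqrt (b\<^sup>2 - \<sigma>\<^sup>2) \<le> (b * b - \<sigma> * s) / v" using h2 v0 by (simp add: pos_le_divide_eq)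
  have p0: "0 < p" using assms by simp
  have "Gf p q b \<sigma> < \<sigma> + p * ((1 - \<sigma> * s) / u) + q * ((b * b - \<sigma> * s) / v)"
    unfolding Gf_def using mult_strict_left_mono[OF i1 p0] mult_left_mono[OF i2, of q] assms by linarith
  also have "\<dots> = p / u + b\<^sup>2 * q / v + (b - b) * (q * b / v)" by (rule key_alg[OF u0 v0 e1])
  finally show ?thesis unfolding PV_def s_def[symmetric] u_def[symmetric] v_def[symmetric] by simp
qed


lemma PV_up:
  assumes "1 \<le> p" "0 \<le> q" "1 \<le> b" "1 \<le> b'"
  shows "PV p q b' \<le> PV p q b + (b' - b) * wf p q b"
proof -
  have "(sg p q b')\<^sup>2 \<le> 1" using sg_facts(3)[OF assms(1,2,4)] by simp
  then show ?thesis using PV_eq_G[OF assms(1,2,4)] key[OF assms] by simp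
qed

lemma wf_bounds:
  assumes "1 \<le> p" "0 \<le> q" "1 \<le> b"
  shows "q \<le> wf p q b" "wf p q b < q + 1"
proof -
  define s where "s = sg p q b"
  define u where "u = sqrt (1 - s\<^sup>2)"
  define v where "v = sqrt (b\<^sup>2 - s\<^sup>2)"
  note F = sg_facts[OF assms(1-3), folded s_def, folded u_def v_def]
  have u0: "0 < u" and v0: "0 < v" using F by auto
  have v2: "v\<^sup>2 = b\<^sup>2 - s\<^sup>2" using F by simp
  have w: "wf p q b = q * b / v" unfolding wf_def s_def[symmetric] v_def[symmetric] ..
  have "v \<le> b" unfolding v_def using assms by (simp add: real_sqrt_le_iff real_le_lsqrt)
  then have "1 \<le> b / v" using v0 by simp
  then have "q * 1 \<le> q * (b / v)" using assms by (intro mult_left_mono) auto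
  then show "q \<le> wf p q b" unfolding w by simp
  define Y where "Y = q * s / v"
  have "0 < p * s / u" using assms F u0 by simp
  then have Y1: "Y < 1" using F(9) unfolding Y_def u_def v_def by linarith
  have Y0: "0 \<le> Y" unfolding Y_def using assms F v0 by simp
  have "(q * b / v)\<^sup>2 = q\<^sup>2 + Y\<^sup>2"
  proof -
    have "(q * b / v)\<^sup>2 = q\<^sup>2 * b\<^sup>2 / v\<^sup>2" by (simp add: power_divide power_mult_distrib)
    also have "\<dots> = q\<^sup>2 * (v\<^sup>2 + s\<^sup>2) / v\<^sup>2" using v2 by simp
    also have "\<dots> = q\<^sup>2 + Y\<^sup>2" unfolding Y_def using v0
      by (simp add: field_simps power_divide power_mult_distrib)
    finally show ?thesis .
  qed
  moreover have "Y\<^sup>2 < 1" using Y0 Y1 by (simp add: power_less_one_iff)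
  ultimately have sq: "(q * b / v)\<^sup>2 < (q + 1)\<^sup>2" using assms by (simp add: power2_eq_square algebra_simps)
  have "q * b / v < q + 1" using power2_less_imp_less[OF sq] assms by simp
  then show "wf p q b < q + 1" unfolding w .
qed


lemma primal:
  assumes "1 \<le> p" "0 \<le> q" "1 \<le> b" "p * x + q * y = 1"
  shows "PV p q b \<le> p * sqrt (1 + x\<^sup>2) + q * b * sqrt (1 + y\<^sup>2)"
proof -
  define s where "s = sg p q b"
  note F = sg_facts[OF assms(1-3), folded s_def]
  have sx: "(sqrt (1 + x\<^sup>2))\<^sup>2 = 1 + x\<^sup>2" "(sqrt (1 + y\<^sup>2))\<^sup>2 = 1 + y\<^sup>2" by simp_all
  have c1: "s * x + sqrt (1 - s\<^sup>2) \<le> sqrt (1 + x\<^sup>2)"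
    using cs_ineq[of s 1 x "sqrt (1 + x\<^sup>2)"] F sx by simp
  have c2: "s * y + sqrt (b\<^sup>2 - s\<^sup>2) \<le> b * sqrt (1 + y\<^sup>2)"
    using cs_ineq[of s b y "sqrt (1 + y\<^sup>2)"] F sx assms by simp
  have "PV p q b = s + p * sqrt (1 - s\<^sup>2) + q * sqrt (b\<^sup>2 - s\<^sup>2)"
    using PV_eq_G[OF assms(1-3)] unfolding Gf_def s_def .
  also have "\<dots> = p * (s * x + sqrt (1 - s\<^sup>2)) + q * (s * y + sqrt (b\<^sup>2 - s\<^sup>2))"
  proof -
    have "s = s * (p * x + q * y)" using assms by simp
    then show ?thesis by (simp add: algebra_simps)
  qed
  also have "\<dots> \<le> p * sqrt (1 + x\<^sup>2) + q * (b * sqrt (1 + y\<^sup>2))"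
    using mult_left_mono[OF c1, of p] mult_left_mono[OF c2, of q] assms by linarith
  finally show ?thesis by simp
qed

definition Pk :: "nat \<Rightarrow> real \<Rightarrow> real" where
  "Pk j b = PV (real j + 1) (real j) b"

definition Wk :: "nat \<Rightarrow> real \<Rightarrow> real" where
  "Wk j b = wf (real j + 1) (real j) b"

lemma qp_vals: "q_fun (2 * real k) = real k" "p_fun (2 * real k) = real k + 1"
proof -
  have fl: "\<lfloor>2 * real k\<rfloor> = 2 * int k"
    by (metis floor_of_nat of_nat_mult of_nat_numeral)
  show "q_fun (2 * real k) = real k" unfolding q_fun_def fl by simp
  then show "p_fun (2 * real k) = real k + 1" unfolding p_fun_def by simp
qed

lemma l_eq: "l_fun (2 * real k) b = Pk k b - 2 * real k - sqrt 2"
  unfolding l_fun_def sigma_hat_def qp_vals Pk_def PV_def sg_def by simp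

lemma delta_eq: "delta k b = Pk (Suc k) b - Pk k b - 2"
proof -
  have "2 * real k + 2 = 2 * real (Suc k)" by simp
  then have "l_fun (2 * real k + 2) b = Pk (Suc k) b - 2 * real (Suc k) - sqrt 2"
    using l_eq[of "Suc k" b] by metis
  then show ?thesis unfolding delta_def using l_eq[of k b] by simp
qed

lemma Pk_up:
  assumes "1 \<le> b" "1 \<le> b'"
  shows "Pk j b' \<le> Pk j b + (b' - b) * Wk j b"
  unfolding Pk_def Wk_def using PV_up[of "real j + 1" "real j" b b'] assms by simp

lemma Wk_bounds:
  assumes "1 \<le> b"
  shows "real j \<le> Wk j b" "Wk j b < real j + 1"
  unfolding Wk_def using wf_bounds[of "real j + 1" "real j" b] assms by auto

lemma Pk_lip:
  assumes "1 \<le> b" "1 \<le> b'"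
  shows "\<bar>Pk j b' - Pk j b\<bar> \<le> (real j + 1) * \<bar>b' - b\<bar>"
proof -
  have A: "Pk j b' - Pk j b \<le> (real j + 1) * \<bar>b' - b\<bar>"
  proof -
    have "(b' - b) * Wk j b \<le> \<bar>b' - b\<bar> * Wk j b"
      using Wk_bounds[OF assms(1), of j] by (intro mult_right_mono) auto
    also have "\<dots> \<le> \<bar>b' - b\<bar> * (real j + 1)"
      using Wk_bounds[OF assms(1), of j] by (intro mult_left_mono) auto
    finally show ?thesis using Pk_up[OF assms, of j] by (simp add: mult.commute)
  qed
  have B: "Pk j b - Pk j b' \<le> (real j + 1) * \<bar>b' - b\<bar>"
  proof -
    have "(b - b') * Wk j b' \<le> \<bar>b - b'\<bar> * Wk j b'"
      using Wk_bounds[OF assms(2), of j] by (intro mult_right_mono) auto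
    also have "\<dots> \<le> \<bar>b - b'\<bar> * (real j + 1)"
      using Wk_bounds[OF assms(2), of j] by (intro mult_left_mono) auto
    finally show ?thesis using Pk_up[OF assms(2,1), of j] by (simp add: mult.commute abs_minus_commute)
  qed
  show ?thesis using A B by linarith
qed

lemma delta_mono:
  assumes "1 \<le> b" "b < b'"
  shows "delta k b < delta k b'"
proof -
  have b': "1 \<le> b'" using assms by simp
  have A: "Pk (Suc k) b \<le> Pk (Suc k) b' + (b - b') * Wk (Suc k) b'" using Pk_up[OF b' assms(1)] .
  have "(b' - b) * (real k + 1) \<le> (b' - b) * Wk (Suc k) b'"
    using Wk_bounds(1)[OF b', of "Suc k"] assms by (intro mult_left_mono) auto
  then have A': "(b' - b) * (real k + 1) \<le> Pk (Suc k) b' - Pk (Suc k) b" using A by (simp add: algebra_simps)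
  have B: "Pk k b' \<le> Pk k b + (b' - b) * Wk k b" using Pk_up[OF assms(1) b'] .
  have "(b' - b) * Wk k b < (b' - b) * (real k + 1)"
    using Wk_bounds(2)[OF assms(1), of k] assms by (intro mult_strict_left_mono) auto
  then show ?thesis unfolding delta_eq using A' B by linarith
qed

lemma delta_cont: "continuous_on {1..sqrt 2} (delta k)"
proof -
  have "(2 * real k + 3)-lipschitz_on {1..sqrt 2} (delta k)"
  proof (rule lipschitz_onI)
    fix x y assume "x \<in> {1..sqrt 2}" "y \<in> {1..sqrt 2}"
    then have xy: "1 \<le> x" "1 \<le> y" by auto
    have "\<bar>delta k x - delta k y\<bar> \<le> \<bar>Pk (Suc k) x - Pk (Suc k) y\<bar> + \<bar>Pk k x - Pk k y\<bar>"
      unfolding delta_eq by linarith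
    also have "\<dots> \<le> (real (Suc k) + 1) * \<bar>x - y\<bar> + (real k + 1) * \<bar>x - y\<bar>"
      using Pk_lip[OF xy(2,1), of "Suc k"] Pk_lip[OF xy(2,1), of k] by linarith
    also have "\<dots> = (2 * real k + 3) * \<bar>x - y\<bar>" by (simp add: algebra_simps)
    finally show "dist (delta k x) (delta k y) \<le> (2 * real k + 3) * dist x y"
      by (simp add: dist_real_def)
  qed simp
  then show ?thesis by (rule lipschitz_on_continuous_on)
qed


lemma delta_conv:
  assumes "1 \<le> b"
  shows "delta k b < delta (Suc k) b"
proof -
  define p1 where "p1 = real k + 2"
  define q1 where "q1 = real k + 1"
  define s where "s = sg p1 q1 b"
  have P1: "Pk (Suc k) b = PV p1 q1 b" unfolding Pk_def p1_def q1_def by (simp add: add.commute)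
  have P2: "Pk (Suc (Suc k)) b = PV (p1 + 1) (q1 + 1) b" unfolding Pk_def p1_def q1_def
    by (simp add: add.commute add.left_commute)
  have P0: "Pk k b = PV (p1 - 1) (q1 - 1) b" unfolding Pk_def p1_def q1_def by (simp add: add.commute)
  have hp: "1 \<le> p1" "0 \<le> q1" unfolding p1_def q1_def by auto
  note F = sg_facts[OF hp assms, folded s_def]
  have ss: "s\<^sup>2 \<le> 1" using F by simp
  have E1: "PV p1 q1 b = Gf p1 q1 b s" using PV_eq_G[OF hp assms] unfolding s_def .
  have E2: "Gf (p1 + 1) (q1 + 1) b s \<le> PV (p1 + 1) (q1 + 1) b"
    using key[of "p1 + 1" "q1 + 1" b b s] hp assms ss by simp
  have hp0: "1 \<le> p1 - 1" "0 \<le> q1 - 1" unfolding p1_def q1_def by auto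
  have neq: "s \<noteq> sg (p1 - 1) (q1 - 1) b"
  proof
    assume eq: "s = sg (p1 - 1) (q1 - 1) b"
    note G = sg_facts[OF hp0 assms, folded eq]
    have "0 < s / sqrt (1 - s\<^sup>2)" "0 < s / sqrt (b\<^sup>2 - s\<^sup>2)" using F by simp_all
    then have "0 < s / sqrt (1 - s\<^sup>2) + s / sqrt (b\<^sup>2 - s\<^sup>2)" by simp
    moreover have "p1 * s / sqrt (1 - s\<^sup>2) + q1 * s / sqrt (b\<^sup>2 - s\<^sup>2)
       = (p1 - 1) * s / sqrt (1 - s\<^sup>2) + (q1 - 1) * s / sqrt (b\<^sup>2 - s\<^sup>2)
         + (s / sqrt (1 - s\<^sup>2) + s / sqrt (b\<^sup>2 - s\<^sup>2))"
      by (simp add: algebra_simps add_divide_distrib diff_divide_distrib)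
    ultimately show False using F(9) G(9) by linarith
  qed
  have E0: "Gf (p1 - 1) (q1 - 1) b s < PV (p1 - 1) (q1 - 1) b"
    using key_strict[OF hp0 assms ss neq] .
  have lin: "Gf (p1 + 1) (q1 + 1) b s + Gf (p1 - 1) (q1 - 1) b s = 2 * Gf p1 q1 b s"
    unfolding Gf_def by (simp add: algebra_simps)
  show ?thesis unfolding delta_eq P0 P1 P2 using E0 E1 E2 lin by linarith
qed


lemma Pk_lower:
  assumes "1 \<le> b" "\<sigma>\<^sup>2 \<le> 1"
  shows "Gf (real j + 1) (real j) b \<sigma> \<le> Pk j b"
  unfolding Pk_def using key[of "real j + 1" "real j" b b \<sigma>] assms by simp

lemma Pk_upper:
  assumes "1 \<le> b" "(real j + 1) * x + real j * y = 1"
  shows "Pk j b \<le> (real j + 1) * sqrt (1 + x\<^sup>2) + real j * b * sqrt (1 + y\<^sup>2)"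
  unfolding Pk_def using primal[of "real j + 1" "real j" b x y] assms by simp

lemma delta_at_1: "delta k 1 < 0"
proof -
  define n :: real where "n = 2 * real k + 1"
  define m :: real where "m = n + 2"
  define r where "r = sqrt (n\<^sup>2 + 1)"
  have n0: "0 < n" and m0: "0 < m" unfolding n_def m_def by auto
  have "(real (Suc k) + 1) + real (Suc k) = m" unfolding m_def n_def by simp
  then have "(real (Suc k) + 1) * (1 / m) + real (Suc k) * (1 / m) = m * (1 / m)"
    by (simp only: distrib_right[symmetric])
  then have "(real (Suc k) + 1) * (1 / m) + real (Suc k) * (1 / m) = 1"
    using m0 by simp
  then have "Pk (Suc k) 1 \<le> (real (Suc k) + 1) * sqrt (1 + (1/m)\<^sup>2) + real (Suc k) * 1 * sqrt (1 + (1/m)\<^sup>2)"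
    using Pk_upper[of 1 "Suc k" "1/m" "1/m"] by simp
  also have "\<dots> = m * sqrt (1 + (1/m)\<^sup>2)" unfolding m_def n_def by (simp add: algebra_simps)
  also have "\<dots> = sqrt (m\<^sup>2 + 1)"
  proof -
    have "m * sqrt (1 + (1/m)\<^sup>2) = sqrt (m\<^sup>2) * sqrt (1 + (1/m)\<^sup>2)" using m0 by simp
    also have "\<dots> = sqrt (m\<^sup>2 * (1 + (1/m)\<^sup>2))" by (simp add: real_sqrt_mult)
    also have "m\<^sup>2 * (1 + (1/m)\<^sup>2) = m\<^sup>2 + 1" using m0 by (simp add: field_simps power2_eq_square)
    finally show ?thesis .
  qed
  finally have U: "Pk (Suc k) 1 \<le> sqrt (m\<^sup>2 + 1)" .
  have "0 < n\<^sup>2 + 1" by (simp add: add_nonneg_pos)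
  then have r0: "0 < r" unfolding r_def by simp
  have r2: "r\<^sup>2 = n\<^sup>2 + 1" unfolding r_def by simp
  have nr: "n < r" unfolding r_def using n0 by (intro real_less_rsqrt) simp
  have s2: "(1 / r)\<^sup>2 \<le> 1"
  proof -
    have "1 \<le> r\<^sup>2" using r2 by (simp add: add_nonneg_nonneg)
    then show ?thesis using r0 by (simp add: power_divide)
  qed
  have sq: "sqrt (1 - (1/r)\<^sup>2) = n / r"
  proof -
    have nz: "1 + n\<^sup>2 \<noteq> 0" by (smt (verit) zero_le_power2)
    have "1 - (1/r)\<^sup>2 = (n / r)\<^sup>2" using r0 r2 nz by (simp add: field_simps power_divide)
    then show ?thesis using n0 r0 by simp
  qed
  have "Gf (real k + 1) (real k) 1 (1 / r) = 1 / r + (real k + 1) * sqrt (1 - (1/r)\<^sup>2) + real k * sqrt (1 - (1/r)\<^sup>2)"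
    unfolding Gf_def by simp
  also have "\<dots> = 1 / r + ((real k + 1) + real k) * (n / r)"
    unfolding sq by (simp only: distrib_right add.assoc)
  also have "\<dots> = 1 / r + n * (n / r)" unfolding n_def by simp
  also have "\<dots> = r" using r0 r2 by (simp add: field_simps power2_eq_square)
  finally have L: "r \<le> Pk k 1" using Pk_lower[of 1 "1/r" k] s2 by simp
  have "sqrt (m\<^sup>2 + 1) < r + 2"
  proof (rule real_less_lsqrt)
    show "0 \<le> r + 2" using r0 by simp
    have "(r + 2)\<^sup>2 = r\<^sup>2 + 4 * r + 4" by (simp add: power2_eq_square algebra_simps)
    also have "\<dots> = n\<^sup>2 + 4 * r + 5" using r2 by simp
    finally show "m\<^sup>2 + 1 < (r + 2)\<^sup>2" unfolding m_def using nr by (simp add: power2_eq_square algebra_simps)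
  qed
  then show ?thesis unfolding delta_eq using U L by linarith
qed


lemma delta_lower:
  assumes "1 \<le> b"
  shows "b - 1 - ((real k + 1) + real k * b) / (2 * (2 * real k + 1)\<^sup>2) \<le> delta k b"
proof -
  define n :: real where "n = 2 * real k + 1"
  define C where "C = (real k + 1) + real k * b"
  have n0: "0 < n" unfolding n_def by simp
  have C0: "0 \<le> C" unfolding C_def using assms by simp
  have "Gf (real (Suc k) + 1) (real (Suc k)) b 0 = (real k + 2) + (real k + 1) * b"
    unfolding Gf_def using assms by simp
  then have L: "(real k + 2) + (real k + 1) * b \<le> Pk (Suc k) b"
    using Pk_lower[OF assms, of 0 "Suc k"] by simp
  have "(real k + 1) + real k = n" unfolding n_def by simp
  then have "(real k + 1) * (1 / n) + real k * (1 / n) = n * (1 / n)"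
    by (simp only: distrib_right[symmetric])
  then have "(real k + 1) * (1 / n) + real k * (1 / n) = 1" using n0 by simp
  then have "Pk k b \<le> (real k + 1) * sqrt (1 + (1/n)\<^sup>2) + real k * b * sqrt (1 + (1/n)\<^sup>2)"
    using Pk_upper[OF assms, of k "1/n" "1/n"] by simp
  also have "\<dots> = C * sqrt (1 + (1/n)\<^sup>2)" unfolding C_def by (simp add: algebra_simps)
  also have "\<dots> \<le> C * (1 + 1 / (2 * n\<^sup>2))"
  proof (rule mult_left_mono[OF _ C0])
    show "sqrt (1 + (1/n)\<^sup>2) \<le> 1 + 1 / (2 * n\<^sup>2)"
    proof (rule real_le_lsqrt)
      show "0 \<le> 1 + 1 / (2 * n\<^sup>2)" by (simp add: add_nonneg_nonneg)
      have "(1 + 1 / (2 * n\<^sup>2))\<^sup>2 = 1 + (1/n)\<^sup>2 + (1 / (2 * n\<^sup>2))\<^sup>2"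
        using n0 by (simp add: power2_eq_square field_simps)
      then show "1 + (1/n)\<^sup>2 \<le> (1 + 1 / (2 * n\<^sup>2))\<^sup>2" by simp
    qed
  qed
  also have "\<dots> = C + C / (2 * n\<^sup>2)" by (simp add: algebra_simps)
  finally have U: "Pk k b \<le> C + C / (2 * n\<^sup>2)" .
  show ?thesis unfolding delta_eq using L U unfolding C_def n_def by (simp add: algebra_simps)
qed


lemma sqrt2_bounds: "141/100 < sqrt (2::real)" "sqrt (2::real) < 142/100"
  by (rule real_less_rsqrt, simp add: power2_eq_square) (rule real_less_lsqrt, simp_all add: power2_eq_square)

lemma delta_sqrt2: "0 < delta k (sqrt 2)"
proof (cases "k = 0")
  case True
  have h: "(3/5::real)\<^sup>2 \<le> 1" by (simp add: power2_eq_square)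
  have s1: "sqrt (1 - (3/5::real)\<^sup>2) = 4/5"
  proof -
    have "sqrt (1 - (3/5::real)\<^sup>2) = sqrt ((4/5)\<^sup>2)" by (simp add: power2_eq_square)
    then show ?thesis by simp
  qed
  have s2: "1.28 < sqrt ((sqrt 2)\<^sup>2 - (3/5::real)\<^sup>2)"
    by (rule real_less_rsqrt) (simp add: power2_eq_square)
  have "Gf (real 1 + 1) (real 1) (sqrt 2) (3/5) = 3/5 + 2 * sqrt (1 - (3/5)\<^sup>2) + sqrt ((sqrt 2)\<^sup>2 - (3/5)\<^sup>2)"
    unfolding Gf_def by simp
  then have L: "3/5 + 2 * (4/5) + 1.28 \<le> Pk 1 (sqrt 2)"
    using Pk_lower[of "sqrt 2" "3/5" 1] h s1 s2 by simp
  have "Pk 0 (sqrt 2) \<le> (real 0 + 1) * sqrt (1 + 1\<^sup>2) + real 0 * sqrt 2 * sqrt (1 + 0\<^sup>2)"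
    using Pk_upper[of "sqrt 2" 0 1 0] by simp
  then have U: "Pk 0 (sqrt 2) \<le> sqrt 2" by simp
  show ?thesis using True L U sqrt2_bounds unfolding delta_eq by simp
next
  case False
  define t where "t = real k"
  define s :: real where "s = sqrt 2"
  have t1: "1 \<le> t" using False unfolding t_def by simp
  have sb: "141/100 < s" "s < 142/100" using sqrt2_bounds unfolding s_def by auto
  have s1: "1 \<le> s" using sb by simp
  have tt: "t \<le> t * t" using t1 by simp
  have ts: "t * s \<le> t * (142/100)" using sb t1 by simp
  have n0: "0 < (2 * t + 1)\<^sup>2" using t1 by simp
  have nn: "(2 * t + 1)\<^sup>2 = 4 * (t * t) + 4 * t + 1" by (simp add: power2_eq_square algebra_simps)
  have q: "(41/100) * (2 * t + 1)\<^sup>2 \<le> (s - 1) * (2 * t + 1)\<^sup>2"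
    using sb n0 by (intro mult_right_mono) auto
  have "(t + 1) + t * s < 2 * ((s - 1) * (2 * t + 1)\<^sup>2)"
    using q nn tt ts t1 by linarith
  also have "\<dots> = (s - 1) * (2 * (2 * t + 1)\<^sup>2)" by simp
  finally have X: "(t + 1) + t * s < (s - 1) * (2 * (2 * t + 1)\<^sup>2)" .
  have d: "0 < 2 * (2 * t + 1)\<^sup>2" using n0 by simp
  have "((t + 1) + t * s) / (2 * (2 * t + 1)\<^sup>2) < s - 1"
    using X by (simp only: pos_divide_less_eq[OF d])
  then have "0 < s - 1 - ((t + 1) + t * s) / (2 * (2 * t + 1)\<^sup>2)" by simp
  then show ?thesis using delta_lower[OF s1, of k] unfolding s_def t_def by linarith
qed

lemma delta_near: "0 < delta k (1 + 2 / (real k + 1))"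
proof -
  define t where "t = real k"
  define b where "b = 1 + 2 / (t + 1)"
  have t0: "0 \<le> t" unfolding t_def by simp
  have b1: "1 \<le> b" unfolding b_def using t0 by simp
  have n0: "0 < (2 * t + 1)\<^sup>2" using t0 by simp
  have C: "((t + 1) + t * b) * (t + 1) = (2 * t + 1) * (t + 1) + 2 * t"
    unfolding b_def using t0 by (simp add: field_simps)
  have e1: "(2 * t + 1) * (t + 1) + 2 * t = 2 * (t * t) + 5 * t + 1" by (simp add: algebra_simps)
  have e2: "2 * (2 * (2 * t + 1)\<^sup>2) = 16 * (t * t) + 16 * t + 4" by (simp add: power2_eq_square algebra_simps)
  have "0 \<le> t * t" by simp
  then have "(2 * t + 1) * (t + 1) + 2 * t < 2 * (2 * (2 * t + 1)\<^sup>2)"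
    unfolding e1 e2 using t0 by linarith
  then have "((t + 1) + t * b) * (t + 1) < 2 * (2 * (2 * t + 1)\<^sup>2)" using C by simp
  then have "((t + 1) + t * b) / (2 * (2 * t + 1)\<^sup>2) < 2 / (t + 1)"
    using n0 t0 by (simp add: field_simps)
  then have "0 < b - 1 - ((t + 1) + t * b) / (2 * (2 * t + 1)\<^sup>2)" unfolding b_def by simp
  then show ?thesis using delta_lower[OF b1, of k] unfolding b_def t_def by linarith
qed


lemma beta_ex1: "\<exists>!\<beta>. 1 < \<beta> \<and> \<beta> < sqrt 2 \<and> delta k \<beta> = 0"
proof -
  have s1: "1 \<le> sqrt (2::real)" by simp
  obtain x where x: "1 \<le> x" "x \<le> sqrt 2" "delta k x = 0"
    using IVT'[of "delta k" 1 0 "sqrt 2", OF _ _ s1 delta_cont] delta_at_1[of k] delta_sqrt2[of k]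
    by auto
  have "x \<noteq> 1" using x delta_at_1[of k] by auto
  moreover have "x \<noteq> sqrt 2" using x delta_sqrt2[of k] by auto
  ultimately have ex: "1 < x \<and> x < sqrt 2 \<and> delta k x = 0" using x by auto
  show ?thesis
  proof (rule ex1I[of _ x])
    show "1 < x \<and> x < sqrt 2 \<and> delta k x = 0" by (fact ex)
    fix y assume y: "1 < y \<and> y < sqrt 2 \<and> delta k y = 0"
    show "y = x"
    proof (rule ccontr)
      assume "y \<noteq> x"
      then consider "y < x" | "x < y" by linarith
      then show False
        using delta_mono[of y x k] delta_mono[of x y k] ex y by (cases, auto)
    qed
  qed
qed

lemma beta_props: "1 < beta_c k" "beta_c k < sqrt 2" "delta k (beta_c k) = 0"
  using theI'[OF beta_ex1[of k]] unfolding beta_c_def by auto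

lemma beta_dec: "beta_c (Suc k) < beta_c k"
proof (rule ccontr)
  assume "\<not> beta_c (Suc k) < beta_c k"
  then have le: "beta_c k \<le> beta_c (Suc k)" by simp
  have a1: "1 \<le> beta_c k" using beta_props(1)[of k] by simp
  have "0 < delta (Suc k) (beta_c k)"
    using delta_conv[OF a1, of k] beta_props(3)[of k] by simp
  moreover have "delta (Suc k) (beta_c k) \<le> delta (Suc k) (beta_c (Suc k))"
    using le delta_mono[OF a1, of "beta_c (Suc k)" "Suc k"] by (cases "beta_c k = beta_c (Suc k)") auto
  ultimately show False using beta_props(3)[of "Suc k"] by simp
qed

lemma beta_upper: "beta_c k < 1 + 2 / (real k + 1)"
proof (rule ccontr)
  assume "\<not> beta_c k < 1 + 2 / (real k + 1)"
  then have le: "1 + 2 / (real k + 1) \<le> beta_c k" by simp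
  have B1: "1 \<le> 1 + 2 / (real k + 1)" by simp
  have "delta k (1 + 2 / (real k + 1)) \<le> delta k (beta_c k)"
    using le delta_mono[OF B1, of "beta_c k" k] by (cases "1 + 2 / (real k + 1) = beta_c k") auto
  then show False using delta_near[of k] beta_props(3)[of k] by simp
qed

theorem lemma3p13:
  shows "(\<forall>k. beta_c (Suc k) < beta_c k) \<and> beta_c \<longlonglongrightarrow> 1"
proof
  show "\<forall>k. beta_c (Suc k) < beta_c k" using beta_dec by blast
  have lim0: "(\<lambda>k. 2 * inverse (real (Suc k))) \<longlonglongrightarrow> 0"
    using tendsto_mult_right_zero[OF LIMSEQ_inverse_real_of_nat, of 2] .
  have "(\<lambda>k. 1 + 2 * inverse (real (Suc k))) \<longlonglongrightarrow> 1 + 0"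
    by (rule tendsto_add[OF tendsto_const lim0])
  then have up: "(\<lambda>k. 1 + 2 / (real k + 1)) \<longlonglongrightarrow> 1"
    by (simp add: inverse_eq_divide add.commute)
  show "beta_c \<longlonglongrightarrow> 1"
  proof (rule tendsto_sandwich[OF _ _ tendsto_const up])
    show "\<forall>\<^sub>F k in sequentially. 1 \<le> beta_c k" using beta_props(1) by (simp add: less_imp_le)
    show "\<forall>\<^sub>F k in sequentially. beta_c k \<le> 1 + 2 / (real k + 1)" using beta_upper by (simp add: less_imp_le)
  qed
qed

end
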